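(* Let $A\in G(n\times m)$, $N\in G(n)$ and $M\in G(m)$. Then $\mathrm{troprank}(A)=\mathrm{troprank}(N\odot A\odot M)$, and $\mathrm{troprank}(A)$ equals the number of columns of $A$ having at least one finite entry.
   Context: $\mathbb{T}=\mathbb{R}\cup\{-\infty\}$ with $a\oplus b=\max\{a,b\}$, $a\odot b=a+b$, and tropical matrix product $(A\odot B)_{ij}=\bigoplus_k a_{ik}\odot b_{kj}$. $G(r\times s)$ is the set of $r\times s$ matrices over $\mathbb{T}$ with at most one finite entry in each row; $G(r)$ is the set of $r\times r$ matrices with exactly one finite entry in each row and each column. The tropical determinant of a square matrix is $\bigoplus_{\sigma}\bigodot_i A_{i,\sigma(i)}$; a minor vanishes if it equals $-\infty$. $\mathrm{troprank}(A)=k$ iff all $(k+1)\times(k+1)$ minors vanish and some $k\times k$ minor does not vanish. *)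

theory Defs
  imports "HOL-Library.Extended_Real"
begin

text \<open>Tropical semiring T = R \<union> {-\<infinity>}, modelled as the extended reals without +\<infinity>.
  Matrices are functions nat \<Rightarrow> nat \<Rightarrow> ereal with explicit dimensions
  (rows indexed by {..<r}, columns by {..<s}).\<close>

definition trop_mat :: "nat \<Rightarrow> nat \<Rightarrow> (nat \<Rightarrow> nat \<Rightarrow> ereal) \<Rightarrow> bool" where
  "trop_mat r s A \<longleftrightarrow> (\<forall>i<r. \<forall>j<s. A i j \<noteq> \<infinity>)"

definition trop_mult :: "nat \<Rightarrow> (nat \<Rightarrow> nat \<Rightarrow> ereal) \<Rightarrow> (nat \<Rightarrow> nat \<Rightarrow> ereal) \<Rightarrow> (nat \<Rightarrow> nat \<Rightarrow> ereal)" where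
  "trop_mult s A B = (\<lambda>i j. SUP k\<in>{..<s}. A i k + B k j)"

definition G_rect :: "nat \<Rightarrow> nat \<Rightarrow> (nat \<Rightarrow> nat \<Rightarrow> ereal) \<Rightarrow> bool" where
  "G_rect r s A \<longleftrightarrow> trop_mat r s A \<and>
     (\<forall>i<r. card {j. j < s \<and> A i j \<noteq> -\<infinity>} \<le> 1)"

definition G_sq :: "nat \<Rightarrow> (nat \<Rightarrow> nat \<Rightarrow> ereal) \<Rightarrow> bool" where
  "G_sq r A \<longleftrightarrow> trop_mat r r A \<and>
     (\<forall>i<r. card {j. j < r \<and> A i j \<noteq> -\<infinity>} = 1) \<and>
     (\<forall>j<r. card {i. i < r \<and> A i j \<noteq> -\<infinity>} = 1)"

definition trop_minor :: "(nat \<Rightarrow> nat \<Rightarrow> ereal) \<Rightarrow> nat set \<Rightarrow> nat set \<Rightarrow> ereal" where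
  "trop_minor A I J = Sup ((\<lambda>\<sigma>. \<Sum>i\<in>I. A i (\<sigma> i)) ` {\<sigma>. bij_betw \<sigma> I J \<and> (\<forall>i. i \<notin> I \<longrightarrow> \<sigma> i = 0)})"

definition is_minor_idx :: "nat \<Rightarrow> nat \<Rightarrow> nat \<Rightarrow> nat set \<Rightarrow> nat set \<Rightarrow> bool" where
  "is_minor_idx r s k I J \<longleftrightarrow> I \<subseteq> {..<r} \<and> J \<subseteq> {..<s} \<and> card I = k \<and> card J = k"

definition has_troprank :: "nat \<Rightarrow> nat \<Rightarrow> (nat \<Rightarrow> nat \<Rightarrow> ereal) \<Rightarrow> nat \<Rightarrow> bool" where
  "has_troprank r s A k \<longleftrightarrow>
     (\<forall>I J. is_minor_idx r s (k+1) I J \<longrightarrow> trop_minor A I J = -\<infinity>) \<and>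
     (\<exists>I J. is_minor_idx r s k I J \<and> trop_minor A I J \<noteq> -\<infinity>)"

end

theory Submission
  imports Defs
begin

lemma sum_noinf:
  fixes f :: "nat \<Rightarrow> ereal"
  assumes "finite I" "\<forall>k\<in>I. f k \<noteq> \<infinity>"
  shows "sum f I \<noteq> \<infinity>"
  using assms by (induct I rule: finite_induct) auto

lemma sum_minf:
  fixes f :: "nat \<Rightarrow> ereal"
  assumes "finite I" "i \<in> I" "f i = -\<infinity>" "\<forall>k\<in>I. f k \<noteq> \<infinity>"
  shows "sum f I = -\<infinity>"
  using assms
proof (induct I rule: finite_induct)
  case (insert x F)
  then show ?case
    by (cases "x = i") (auto simp: sum_noinf)
qed simp

lemma sum_fin:
  fixes f :: "nat \<Rightarrow> ereal"
  assumes "finite I" "\<forall>k\<in>I. f k \<noteq> \<infinity> \<and> f k \<noteq> -\<infinity>"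
  shows "sum f I \<noteq> -\<infinity>"
proof -
  have "\<bar>sum f I\<bar> \<noteq> \<infinity>" using assms by (subst sum_Inf) auto
  then show ?thesis by auto
qed

lemma sup_props:
  fixes f :: "nat \<Rightarrow> ereal"
  assumes "finite K" "\<forall>k\<in>K. f k \<noteq> \<infinity>"
  shows "(SUP k\<in>K. f k) \<noteq> \<infinity> \<and> ((SUP k\<in>K. f k) \<noteq> -\<infinity> \<longleftrightarrow> (\<exists>k\<in>K. f k \<noteq> -\<infinity>))"
  using assms
proof (induct K rule: finite_induct)
  case empty
  then show ?case by (simp add: bot_ereal_def)
next
  case (insert x F)
  then show ?case by (auto simp: sup_ereal_def max_def)
qed

lemma rank_G:
  assumes G: "G_rect n m A"
  shows "has_troprank n m A (card {j. j < m \<and> (\<exists>i<n. A i j \<noteq> -\<infinity>)})"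
proof -
  define C where "C = {j. j < m \<and> (\<exists>i<n. A i j \<noteq> -\<infinity>)}"
  have finC: "finite C" unfolding C_def by auto
  have noinf: "\<And>i j. i < n \<Longrightarrow> j < m \<Longrightarrow> A i j \<noteq> \<infinity>"
    using G unfolding G_rect_def trop_mat_def by auto
  have row: "\<And>i j j'. i < n \<Longrightarrow> j < m \<Longrightarrow> j' < m \<Longrightarrow> A i j \<noteq> -\<infinity> \<Longrightarrow> A i j' \<noteq> -\<infinity> \<Longrightarrow> j = j'"
  proof -
    fix i j j' assume h: "i < n" "j < m" "j' < m" "A i j \<noteq> -\<infinity>" "A i j' \<noteq> -\<infinity>"
    have "card {j. j < m \<and> A i j \<noteq> -\<infinity>} \<le> Suc 0" using G h(1) unfolding G_rect_def by auto
    then have "\<forall>a\<in>{j. j < m \<and> A i j \<noteq> -\<infinity>}. \<forall>b\<in>{j. j < m \<and> A i j \<noteq> -\<infinity>}. a = b"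
      by (subst card_le_Suc0_iff_eq[symmetric]) auto
    then show "j = j'" using h by auto
  qed
  have part1: "\<forall>I J. is_minor_idx n m (card C + 1) I J \<longrightarrow> trop_minor A I J = -\<infinity>"
  proof (intro allI impI)
    fix I J assume mi: "is_minor_idx n m (card C + 1) I J"
    then have IJ: "I \<subseteq> {..<n}" "J \<subseteq> {..<m}" "card J = card C + 1" unfolding is_minor_idx_def by auto
    have finI: "finite I" using IJ(1) finite_subset by blast
    have "\<not> J \<subseteq> C"
    proof
      assume "J \<subseteq> C"
      then have "card J \<le> card C" using finC card_mono by blast
      then show False using IJ(3) by simp
    qed
    then obtain j where j: "j \<in> J" "j \<notin> C" by blast
    have jm: "j < m" using j IJ(2) by auto
    have col: "\<And>i. i < n \<Longrightarrow> A i j = -\<infinity>" using j(2) jm unfolding C_def by auto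
    show "trop_minor A I J = -\<infinity>"
      unfolding trop_minor_def bot_ereal_def[symmetric] Sup_bot_conv
    proof (intro ballI)
      fix x assume "x \<in> (\<lambda>\<sigma>. \<Sum>i\<in>I. A i (\<sigma> i)) ` {\<sigma>. bij_betw \<sigma> I J \<and> (\<forall>i. i \<notin> I \<longrightarrow> \<sigma> i = 0)}"
      then obtain \<sigma> where s: "bij_betw \<sigma> I J" and x: "x = (\<Sum>i\<in>I. A i (\<sigma> i))" by auto
      have "j \<in> \<sigma> ` I" using s j(1) bij_betw_imp_surj_on by blast
      then obtain i where i: "i \<in> I" "\<sigma> i = j" by blast
      have "x = -\<infinity>" unfolding x
      proof (rule sum_minf[OF finI i(1)])
        show "A i (\<sigma> i) = -\<infinity>" using i col IJ(1) by auto
        show "\<forall>k\<in>I. A k (\<sigma> k) \<noteq> \<infinity>"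
        proof
          fix k assume k: "k \<in> I"
          then have "\<sigma> k \<in> J" using s bij_betwE by blast
          then show "A k (\<sigma> k) \<noteq> \<infinity>" using noinf IJ k by auto
        qed
      qed
      then show "x = bot" by (simp add: bot_ereal_def)
    qed
  qed
  define r where "r = (\<lambda>j. SOME i. i < n \<and> A i j \<noteq> -\<infinity>)"
  have r: "r j < n \<and> A (r j) j \<noteq> -\<infinity>" if "j \<in> C" for j
  proof -
    have "\<exists>i. i < n \<and> A i j \<noteq> -\<infinity>" using that unfolding C_def by auto
    then show ?thesis unfolding r_def by (rule someI_ex)
  qed
  have injr: "inj_on r C"
  proof (rule inj_onI)
    fix a b assume "a \<in> C" "b \<in> C" "r a = r b"
    then have ab: "a < m" "b < m" unfolding C_def by auto
    have "r a < n" "A (r a) a \<noteq> -\<infinity>" "A (r a) b \<noteq> -\<infinity>"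
      using r[OF \<open>a \<in> C\<close>] r[OF \<open>b \<in> C\<close>] \<open>r a = r b\<close> by simp_all
    then show "a = b" using row[of "r a" a b] ab by blast
  qed
  define I where "I = r ` C"
  define \<sigma> where "\<sigma> = (\<lambda>i. if i \<in> I then the_inv_into C r i else 0)"
  have bs: "bij_betw \<sigma> I C"
  proof -
    have "bij_betw (the_inv_into C r) I C" unfolding I_def using injr by (rule bij_betw_the_inv_into[OF inj_on_imp_bij_betw])
    moreover have "\<And>i. i \<in> I \<Longrightarrow> \<sigma> i = the_inv_into C r i" unfolding \<sigma>_def by simp
    ultimately show ?thesis using bij_betw_cong[of I \<sigma> "the_inv_into C r" C] by simp
  qed
  have part2: "\<exists>I J. is_minor_idx n m (card C) I J \<and> trop_minor A I J \<noteq> -\<infinity>"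
  proof (intro exI conjI)
    show "is_minor_idx n m (card C) I C"
      unfolding is_minor_idx_def
    proof (intro conjI)
      show "I \<subseteq> {..<n}" unfolding I_def using r by auto
      show "C \<subseteq> {..<m}" unfolding C_def by auto
      show "card I = card C" unfolding I_def using card_image[OF injr] .
    qed simp
    have finI: "finite I" unfolding I_def using finC by auto
    have mem: "(\<Sum>i\<in>I. A i (\<sigma> i)) \<in> (\<lambda>\<sigma>. \<Sum>i\<in>I. A i (\<sigma> i)) ` {\<sigma>. bij_betw \<sigma> I C \<and> (\<forall>i. i \<notin> I \<longrightarrow> \<sigma> i = 0)}"
    proof -
      have "\<forall>i. i \<notin> I \<longrightarrow> \<sigma> i = 0" unfolding \<sigma>_def by simp
      then have "\<sigma> \<in> {\<sigma>. bij_betw \<sigma> I C \<and> (\<forall>i. i \<notin> I \<longrightarrow> \<sigma> i = 0)}" using bs by simp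
      from imageI[OF this, of "\<lambda>\<sigma>. \<Sum>i\<in>I. A i (\<sigma> i)"] show ?thesis by simp
    qed
    have fin: "(\<Sum>i\<in>I. A i (\<sigma> i)) \<noteq> -\<infinity>"
    proof (rule sum_fin[OF finI], intro ballI conjI)
      fix i assume iI: "i \<in> I"
      then obtain j where j: "j \<in> C" "i = r j" unfolding I_def by auto
      have "\<sigma> i = j" unfolding \<sigma>_def using iI j the_inv_into_f_f[OF injr j(1)] by simp
      moreover have "j < m" using j(1) unfolding C_def by auto
      ultimately show "A i (\<sigma> i) \<noteq> \<infinity>" "A i (\<sigma> i) \<noteq> -\<infinity>" using r[OF j(1)] j noinf by auto
    qed
    show "trop_minor A I C \<noteq> -\<infinity>"
      unfolding trop_minor_def
    proof
      assume "Sup ((\<lambda>\<sigma>. \<Sum>i\<in>I. A i (\<sigma> i)) ` {\<sigma>. bij_betw \<sigma> I C \<and> (\<forall>i. i \<notin> I \<longrightarrow> \<sigma> i = 0)}) = -\<infinity>"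
      then have "\<forall>x \<in> (\<lambda>\<sigma>. \<Sum>i\<in>I. A i (\<sigma> i)) ` {\<sigma>. bij_betw \<sigma> I C \<and> (\<forall>i. i \<notin> I \<longrightarrow> \<sigma> i = 0)}. x = bot"
        unfolding bot_ereal_def[symmetric] Sup_bot_conv .
      then show False using mem fin by (auto simp: bot_ereal_def)
    qed
  qed
  show ?thesis using part1 part2 unfolding has_troprank_def C_def by blast
qed

lemma plus_minf_iff:
  fixes a b :: ereal
  assumes "a \<noteq> \<infinity>" "b \<noteq> \<infinity>"
  shows "a + b \<noteq> \<infinity> \<and> (a + b = -\<infinity> \<longleftrightarrow> a = -\<infinity> \<or> b = -\<infinity>)"
  using assms by (cases a; cases b) auto

lemma perm_rows:
  assumes G: "G_sq n N"
  shows "\<exists>\<pi>. bij_betw \<pi> {..<n} {..<n} \<and> (\<forall>i<n. \<forall>k<n. N i k \<noteq> -\<infinity> \<longleftrightarrow> k = \<pi> i)"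
proof -
  define \<pi> where "\<pi> = (\<lambda>i. the_elem {k. k < n \<and> N i k \<noteq> -\<infinity>})"
  have P: "{k. k < n \<and> N i k \<noteq> -\<infinity>} = {\<pi> i}" if "i < n" for i
  proof -
    have "card {k. k < n \<and> N i k \<noteq> -\<infinity>} = Suc 0" using G that unfolding G_sq_def by auto
    then obtain x where x: "{k. k < n \<and> N i k \<noteq> -\<infinity>} = {x}" unfolding card_1_singleton_iff by blast
    have "\<pi> i = x" unfolding \<pi>_def x by simp
    then show ?thesis using x by simp
  qed
  have P2: "\<forall>i<n. \<forall>k<n. N i k \<noteq> -\<infinity> \<longleftrightarrow> k = \<pi> i"
  proof (intro allI impI)
    fix i k assume "i < n" "k < n"
    then show "N i k \<noteq> -\<infinity> \<longleftrightarrow> k = \<pi> i" using P[of i] by (auto simp: set_eq_iff)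
  qed
  have inj: "inj_on \<pi> {..<n}"
  proof (rule inj_onI)
    fix i i' assume h: "i \<in> {..<n}" "i' \<in> {..<n}" "\<pi> i = \<pi> i'"
    have pi: "\<pi> i < n" using P[of i] h(1) by (auto simp: set_eq_iff)
    have "card {a. a < n \<and> N a (\<pi> i) \<noteq> -\<infinity>} = 1" using G pi unfolding G_sq_def by auto
    then have "\<forall>a\<in>{a. a < n \<and> N a (\<pi> i) \<noteq> -\<infinity>}. \<forall>b\<in>{a. a < n \<and> N a (\<pi> i) \<noteq> -\<infinity>}. a = b"
      using card_le_Suc0_iff_eq[of "{a. a < n \<and> N a (\<pi> i) \<noteq> -\<infinity>}"] by auto
    moreover have "N i (\<pi> i) \<noteq> -\<infinity>" "N i' (\<pi> i) \<noteq> -\<infinity>" using P2 h pi by auto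
    ultimately show "i = i'" using h by auto
  qed
  have sub: "\<pi> ` {..<n} \<subseteq> {..<n}" using P by (auto simp: set_eq_iff)
  have "\<pi> ` {..<n} = {..<n}" using endo_inj_surj[OF _ sub inj] by simp
  then have "bij_betw \<pi> {..<n} {..<n}" using inj unfolding bij_betw_def by simp
  then show ?thesis using P2 by blast
qed

lemma G_sq_transpose: "G_sq n N \<Longrightarrow> G_sq n (\<lambda>i j. N j i)"
  unfolding G_sq_def trop_mat_def by auto

lemma sup_sum_props:
  fixes f g :: "nat \<Rightarrow> ereal"
  assumes "finite K" "\<forall>k\<in>K. f k \<noteq> \<infinity> \<and> g k \<noteq> \<infinity>"
  shows "(SUP k\<in>K. f k + g k) \<noteq> \<infinity> \<and> ((SUP k\<in>K. f k + g k) \<noteq> -\<infinity> \<longleftrightarrow> (\<exists>k\<in>K. f k \<noteq> -\<infinity> \<and> g k \<noteq> -\<infinity>))"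
proof -
  have h: "\<forall>k\<in>K. f k + g k \<noteq> \<infinity>" using assms(2) plus_minf_iff by blast
  have e: "(f k + g k \<noteq> -\<infinity>) = (f k \<noteq> -\<infinity> \<and> g k \<noteq> -\<infinity>)" if "k \<in> K" for k
    using assms(2) that plus_minf_iff[of "f k" "g k"] by blast
  have ex: "(\<exists>k\<in>K. f k + g k \<noteq> -\<infinity>) = (\<exists>k\<in>K. f k \<noteq> -\<infinity> \<and> g k \<noteq> -\<infinity>)"
    using e by blast
  from sup_props[OF assms(1) h] show ?thesis unfolding ex .
qed

theorem mainTheorem3:
  fixes n m :: nat and A N M :: "nat \<Rightarrow> nat \<Rightarrow> ereal"
  assumes "G_rect n m A" and "G_sq n N" and "G_sq m M"
  shows "has_troprank n m A (card {j. j < m \<and> (\<exists>i<n. A i j \<noteq> -\<infinity>)})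
    \<and> has_troprank n m (trop_mult m (trop_mult n N A) M)
                       (card {j. j < m \<and> (\<exists>i<n. A i j \<noteq> -\<infinity>)})"
proof
  show "has_troprank n m A (card {j. j < m \<and> (\<exists>i<n. A i j \<noteq> -\<infinity>)})"
    using rank_G[OF assms(1)] .
  obtain \<pi> where pi: "bij_betw \<pi> {..<n} {..<n}" "\<forall>i<n. \<forall>k<n. N i k \<noteq> -\<infinity> \<longleftrightarrow> k = \<pi> i"
    using perm_rows[OF assms(2)] by blast
  obtain \<tau> where tau: "bij_betw \<tau> {..<m} {..<m}" "\<forall>j<m. \<forall>k<m. M k j \<noteq> -\<infinity> \<longleftrightarrow> k = \<tau> j"
    using perm_rows[OF G_sq_transpose[OF assms(3)]] by blast
  have pin: "\<pi> i < n" if "i < n" for i using pi(1) that bij_betwE by blast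
  have taum: "\<tau> j < m" if "j < m" for j using tau(1) that bij_betwE by blast
  have Ai: "A i j \<noteq> \<infinity>" if "i < n" "j < m" for i j using assms(1) that unfolding G_rect_def trop_mat_def by auto
  have Ni: "N i j \<noteq> \<infinity>" if "i < n" "j < n" for i j using assms(2) that unfolding G_sq_def trop_mat_def by auto
  have Mi: "M i j \<noteq> \<infinity>" if "i < m" "j < m" for i j using assms(3) that unfolding G_sq_def trop_mat_def by auto
  define NA where "NA = trop_mult n N A"
  define B where "B = trop_mult m NA M"
  have NAp: "NA i j \<noteq> \<infinity> \<and> (NA i j \<noteq> -\<infinity> \<longleftrightarrow> A (\<pi> i) j \<noteq> -\<infinity>)" if "i < n" "j < m" for i j
  proof -
    have "\<forall>k\<in>{..<n}. N i k \<noteq> \<infinity> \<and> A k j \<noteq> \<infinity>" using Ni Ai that by auto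
    from sup_sum_props[OF _ this] have "NA i j \<noteq> \<infinity> \<and> (NA i j \<noteq> -\<infinity> \<longleftrightarrow> (\<exists>k\<in>{..<n}. N i k \<noteq> -\<infinity> \<and> A k j \<noteq> -\<infinity>))"
      unfolding NA_def trop_mult_def by simp
    moreover have "(\<exists>k\<in>{..<n}. N i k \<noteq> -\<infinity> \<and> A k j \<noteq> -\<infinity>) \<longleftrightarrow> A (\<pi> i) j \<noteq> -\<infinity>"
      using pi(2) that pin[OF that(1)] by auto
    ultimately show ?thesis by simp
  qed
  have Bp: "B i j \<noteq> \<infinity> \<and> (B i j \<noteq> -\<infinity> \<longleftrightarrow> A (\<pi> i) (\<tau> j) \<noteq> -\<infinity>)" if "i < n" "j < m" for i j
  proof -
    have "\<forall>k\<in>{..<m}. NA i k \<noteq> \<infinity> \<and> M k j \<noteq> \<infinity>" using NAp Mi that by auto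
    from sup_sum_props[OF _ this] have "B i j \<noteq> \<infinity> \<and> (B i j \<noteq> -\<infinity> \<longleftrightarrow> (\<exists>k\<in>{..<m}. NA i k \<noteq> -\<infinity> \<and> M k j \<noteq> -\<infinity>))"
      unfolding B_def trop_mult_def by simp
    moreover have "(\<exists>k\<in>{..<m}. NA i k \<noteq> -\<infinity> \<and> M k j \<noteq> -\<infinity>) \<longleftrightarrow> A (\<pi> i) (\<tau> j) \<noteq> -\<infinity>"
      using tau(2) that taum[OF that(2)] NAp[OF that(1)] by auto
    ultimately show ?thesis by simp
  qed
  have injt: "inj_on \<tau> {..<m}" using tau(1) bij_betw_def by blast
  have GB: "G_rect n m B"
    unfolding G_rect_def trop_mat_def
  proof (intro conjI allI impI)
    fix i j assume "i < n" "j < m" then show "B i j \<noteq> \<infinity>" using Bp by blast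
  next
    fix i assume i: "i < n"
    have "card {j. j < m \<and> B i j \<noteq> -\<infinity>} \<le> card {j. j < m \<and> A (\<pi> i) j \<noteq> -\<infinity>}"
    proof (rule card_inj_on_le)
      show "inj_on \<tau> {j. j < m \<and> B i j \<noteq> -\<infinity>}" using injt by (rule inj_on_subset) auto
      show "\<tau> ` {j. j < m \<and> B i j \<noteq> -\<infinity>} \<subseteq> {j. j < m \<and> A (\<pi> i) j \<noteq> -\<infinity>}"
        using Bp i taum by auto
    qed auto
    also have "\<dots> \<le> 1" using assms(1) pin[OF i] unfolding G_rect_def by auto
    finally show "card {j. j < m \<and> B i j \<noteq> -\<infinity>} \<le> 1" .
  qed
  have "{j. j < m \<and> (\<exists>i<n. B i j \<noteq> -\<infinity>)} = {j. j < m \<and> (\<exists>i<n. A (\<pi> i) (\<tau> j) \<noteq> -\<infinity>)}"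
    using Bp by auto
  also have "\<dots> = {j. j < m \<and> (\<exists>i<n. A i (\<tau> j) \<noteq> -\<infinity>)}"
  proof -
    have ex: "(\<exists>i<n. P (\<pi> i)) \<longleftrightarrow> (\<exists>i<n. P i)" for P
    proof
      assume "\<exists>i<n. P (\<pi> i)" then show "\<exists>i<n. P i" using pin by blast
    next
      assume "\<exists>i<n. P i"
      then obtain i where "i < n" "P i" by blast
      then have "i \<in> \<pi> ` {..<n}" using pi(1) bij_betw_imp_surj_on by fastforce
      then show "\<exists>i<n. P (\<pi> i)" using \<open>P i\<close> by auto
    qed
    show ?thesis
    proof (rule Collect_cong)
      fix j show "(j < m \<and> (\<exists>i<n. A (\<pi> i) (\<tau> j) \<noteq> -\<infinity>)) = (j < m \<and> (\<exists>i<n. A i (\<tau> j) \<noteq> -\<infinity>))"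
        using ex[of "\<lambda>i. A i (\<tau> j) \<noteq> -\<infinity>"] by simp
    qed
  qed
  finally have eq1: "{j. j < m \<and> (\<exists>i<n. B i j \<noteq> -\<infinity>)} = {j. j < m \<and> (\<exists>i<n. A i (\<tau> j) \<noteq> -\<infinity>)}" .
  have img: "\<tau> ` {j. j < m \<and> (\<exists>i<n. A i (\<tau> j) \<noteq> -\<infinity>)} = {j. j < m \<and> (\<exists>i<n. A i j \<noteq> -\<infinity>)}"
  proof
    show "\<tau> ` {j. j < m \<and> (\<exists>i<n. A i (\<tau> j) \<noteq> -\<infinity>)} \<subseteq> {j. j < m \<and> (\<exists>i<n. A i j \<noteq> -\<infinity>)}"
      using taum by auto
  next
    show "{j. j < m \<and> (\<exists>i<n. A i j \<noteq> -\<infinity>)} \<subseteq> \<tau> ` {j. j < m \<and> (\<exists>i<n. A i (\<tau> j) \<noteq> -\<infinity>)}"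
    proof
      fix j assume j: "j \<in> {j. j < m \<and> (\<exists>i<n. A i j \<noteq> -\<infinity>)}"
      then have "j \<in> \<tau> ` {..<m}" using tau(1) bij_betw_imp_surj_on by fastforce
      then obtain j' where "j' < m" "j = \<tau> j'" by auto
      then show "j \<in> \<tau> ` {j. j < m \<and> (\<exists>i<n. A i (\<tau> j) \<noteq> -\<infinity>)}" using j by auto
    qed
  qed
  have "card {j. j < m \<and> (\<exists>i<n. B i j \<noteq> -\<infinity>)} = card {j. j < m \<and> (\<exists>i<n. A i j \<noteq> -\<infinity>)}"
    unfolding eq1 img[symmetric]
    by (rule card_image[symmetric], rule inj_on_subset[OF injt]) auto
  with rank_G[OF GB] show "has_troprank n m (trop_mult m (trop_mult n N A) M)
                       (card {j. j < m \<and> (\<exists>i<n. A i j \<noteq> -\<infinity>)})"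
    unfolding B_def NA_def by simp
qed

end
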